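(* Let $k>1$, $g_c=k/(1+k)^2$ and $X(g)=\frac{1-\sqrt{1-4g}}2$. For $T_0\in\mathcal T_{\rm fin}$ of height $r$ with $K=|D_r(T_0)|$, set $\Lambda(T_0)=K\,k^{r-1}g_c^{|T_0|-K}X(g_c)^{K-1}$. Then for every $r\in\mathbb N$, $$\sum_{T_0\in\mathcal T_{\rm fin}:\,h(T_0)=r}\Lambda(T_0)=1.$$
   Context: Rooted planar trees: $D_r(T)$ is the ordered set of vertices at height $r$, root has exactly one child; $|T|$ = number of edges; $h(T)$ = height; $\mathcal T_{\rm fin}$ = set of finite such trees. *)

theory Defs
  imports "HOL-Analysis.Analysis"
begin

text \<open>Finite rooted planar (ordered) trees: a vertex together with the ordered list of its children.\<close>
datatype ptree = Node "ptree list"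

fun tree_edges :: "ptree \<Rightarrow> nat" where
  "tree_edges (Node ts) = (\<Sum>t\<leftarrow>ts. Suc (tree_edges t))"

fun tree_height :: "ptree \<Rightarrow> nat" where
  "tree_height (Node ts) = (if ts = [] then 0 else Suc (Max (set (map tree_height ts))))"

fun level_count :: "ptree \<Rightarrow> nat \<Rightarrow> nat" where
  "level_count (Node ts) 0 = 1"
| "level_count (Node ts) (Suc r) = (\<Sum>t\<leftarrow>ts. level_count t r)"

definition T_fin :: "ptree set" where
  "T_fin = {T. \<exists>t. T = Node [t]}"

definition g_c :: "real \<Rightarrow> real" where
  "g_c k = k / (1 + k)^2"

definition X_fun :: "real \<Rightarrow> real" where
  "X_fun g = (1 - sqrt (1 - 4 * g)) / 2"

definition Lambda :: "real \<Rightarrow> ptree \<Rightarrow> real" where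
  "Lambda k T = (let r = tree_height T; K = level_count T r in
     real K * k ^ (r - 1) * g_c k ^ (tree_edges T - K) * X_fun (g_c k) ^ (K - 1))"

end

theory Submission
  imports Defs
begin

definition lenlists :: "'a set \<Rightarrow> nat \<Rightarrow> 'a list set" where
  "lenlists A n = {xs. set xs \<subseteq> A \<and> length xs = n}"

lemma nonneg_SigmaI:
  fixes f :: "'a \<times> 'b \<Rightarrow> real"
  assumes f: "\<And>x. x \<in> A \<Longrightarrow> ((\<lambda>y. f (x, y)) has_sum g x) (B x)"
    and g: "(g has_sum S) A"
    and nn: "\<And>x y. x \<in> A \<Longrightarrow> y \<in> B x \<Longrightarrow> f (x, y) \<ge> 0"
  shows "(f has_sum S) (Sigma A B)"
  by (rule has_sum_SigmaI[OF f g summable_on_SigmaI[OF f has_sum_imp_summable[OF g] nn]])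

lemma Lcons:
  fixes F :: "'a \<Rightarrow> real" and G :: "'a list \<Rightarrow> real"
  assumes F: "(F has_sum s) A" and G: "(G has_sum S) (lenlists A n)"
    and Fnn: "\<And>x. x \<in> A \<Longrightarrow> F x \<ge> 0" and Gnn: "\<And>xs. xs \<in> lenlists A n \<Longrightarrow> G xs \<ge> 0"
  shows "((\<lambda>xs. F (hd xs) * G (tl xs)) has_sum (s * S)) (lenlists A (Suc n))"
proof -
  have "((\<lambda>(x, xs). F x * G xs) has_sum (s * S)) (A \<times> lenlists A n)"
  proof (rule nonneg_SigmaI)
    show "((\<lambda>y. case (x, y) of (x, xs) \<Rightarrow> F x * G xs) has_sum F x * S) (lenlists A n)" for x
      using has_sum_cmult_right[OF G, of "F x"] by simp
    show "((\<lambda>x. F x * S) has_sum s * S) A"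
      using has_sum_cmult_left[OF F] by simp
  qed (auto intro!: mult_nonneg_nonneg Fnn Gnn)
  also have "?this \<longleftrightarrow> ?thesis"
    by (rule has_sum_reindex_bij_witness[where j = "\<lambda>(x, xs). x # xs" and i = "\<lambda>ys. (hd ys, tl ys)"])
      (auto simp: lenlists_def length_Suc_conv)
  finally show ?thesis .
qed

lemma Lunion:
  fixes F :: "'a list \<Rightarrow> real"
  assumes F: "\<And>n. (F has_sum c n) (lenlists A n)" and c: "(c has_sum S) UNIV"
    and nn: "\<And>xs. set xs \<subseteq> A \<Longrightarrow> F xs \<ge> 0"
  shows "(F has_sum S) (lists A)"
proof -
  have "((\<lambda>(n, xs). F xs) has_sum S) (Sigma UNIV (lenlists A))"
    by (rule nonneg_SigmaI) (use F c nn in \<open>auto simp: lenlists_def\<close>)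
  also have "?this \<longleftrightarrow> ?thesis"
    by (rule has_sum_reindex_bij_witness[where j = "\<lambda>(n, xs). xs" and i = "\<lambda>xs. (length xs, xs)"])
      (auto simp: lenlists_def)
  finally show ?thesis .
qed

lemma geom_has_sum:
  fixes s :: real assumes "0 \<le> s" "s < 1"
  shows "((\<lambda>n. s ^ n) has_sum (1 / (1 - s))) UNIV"
  by (rule sums_nonneg_imp_has_sum) (use assms geometric_sums[of s] in auto)

lemma geom_deriv_has_sum:
  fixes s :: real assumes "0 \<le> s" "s < 1"
  shows "((\<lambda>n. real n * s ^ (n - 1)) has_sum (1 / (1 - s)^2)) UNIV"
proof (rule sums_nonneg_imp_has_sum)
  have "(\<lambda>n. of_nat (Suc n) * s ^ n) sums (1 / (1 - s)^2)"
    by (rule geometric_deriv_sums) (use assms in auto)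
  then have "(\<lambda>n. real (Suc n) * s ^ (Suc n - 1)) sums (1 / (1 - s)^2 + real 0 * s ^ (0 - 1))"
    by simp
  then show "(\<lambda>n. real n * s ^ (n - 1)) sums (1 / (1 - s)^2)"
    by (subst (asm) sums_Suc_iff) simp
qed (use assms in auto)

fun kids :: "ptree \<Rightarrow> ptree list" where "kids (Node ts) = ts"

definition wA :: "real \<Rightarrow> real \<Rightarrow> nat \<Rightarrow> ptree \<Rightarrow> real" where
  "wA q C h t = q ^ tree_edges t * C ^ level_count t h"

definition wB :: "real \<Rightarrow> real \<Rightarrow> nat \<Rightarrow> ptree \<Rightarrow> real" where
  "wB q C h t = q ^ tree_edges t * real (level_count t h) * C ^ (level_count t h - 1)"

definition H :: "nat \<Rightarrow> ptree set" where "H h = {t. tree_height t \<le> h}"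

lemma height_Node_le: "tree_height (Node ts) \<le> Suc h \<longleftrightarrow> (\<forall>t\<in>set ts. tree_height t \<le> h)"
  by (cases "ts = []") auto

lemma H_Suc: "H (Suc h) = Node ` lists (H h)"
proof -
  have "t \<in> Node ` lists (H h)" if "t \<in> H (Suc h)" for t
  proof (cases t)
    case (Node ts)
    with that have "\<forall>t\<in>set ts. tree_height t \<le> h"
      using height_Node_le[of ts h] by (simp add: H_def del: tree_height.simps)
    then show ?thesis using Node by (auto simp: H_def)
  qed
  then show ?thesis by (auto simp: H_def height_Node_le)
qed

lemma H_0: "H 0 = {Node []}"
proof -
  have "tree_height t = 0 \<longleftrightarrow> t = Node []" for t
    by (cases t) auto
  then show ?thesis by (auto simp: H_def)
qed

lemma wA_Node: "wA q C (Suc h) (Node ts) = prod_list (map (\<lambda>t. q * wA q C h t) ts)"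
  by (induction ts) (auto simp: wA_def power_add)

lemma nat_deriv_split:
  fixes C :: real
  shows "real (m + n) * C ^ (m + n - 1) = real m * C ^ (m - 1) * C ^ n + real n * C ^ (n - 1) * C ^ m"
proof (cases "m = 0 \<or> n = 0")
  case True then show ?thesis by auto
next
  case False
  then have e: "m + n - 1 = (m - 1) + n" "m + n - 1 = (n - 1) + m" by auto
  have a: "C ^ (m + n - 1) = C ^ (m - 1) * C ^ n" by (subst e(1)) (rule power_add)
  have b: "C ^ (m + n - 1) = C ^ (n - 1) * C ^ m" by (subst e(2)) (rule power_add)
  have "real (m + n) * C ^ (m + n - 1) = real m * C ^ (m + n - 1) + real n * C ^ (m + n - 1)"
    by (simp add: distrib_right)
  also have "\<dots> = real m * (C ^ (m - 1) * C ^ n) + real n * (C ^ (n - 1) * C ^ m)"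
    using a b by simp
  finally show ?thesis by (simp only: mult.assoc)
qed

lemma wB_Node_Cons: "wB q C (Suc h) (Node (t # ts)) =
   q * wB q C h t * wA q C (Suc h) (Node ts) + q * wA q C h t * wB q C (Suc h) (Node ts)"
proof -
  define m where "m = level_count t h"
  define n where "n = level_count (Node ts) (Suc h)"
  define e where "e = tree_edges t"
  define f where "f = tree_edges (Node ts)"
  have "wB q C (Suc h) (Node (t # ts)) = q * q ^ e * q ^ f * (real (m + n) * C ^ (m + n - 1))"
    by (simp add: wB_def m_def n_def e_def f_def power_add algebra_simps)
  also have "\<dots> = q * q ^ e * q ^ f * (real m * C ^ (m - 1) * C ^ n + real n * C ^ (n - 1) * C ^ m)"
    by (simp only: nat_deriv_split)
  also have "\<dots> = q * wB q C h t * wA q C (Suc h) (Node ts) + q * wA q C h t * wB q C (Suc h) (Node ts)"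
    by (simp add: wA_def wB_def m_def n_def e_def f_def algebra_simps del: tree_edges.simps level_count.simps)
  finally show ?thesis .
qed

lemma lenlists_0: "lenlists A 0 = {[]}"
  by (auto simp: lenlists_def)

lemma lenlists_SucE: "xs \<in> lenlists A (Suc n) \<Longrightarrow> \<exists>y ys. xs = y # ys \<and> y \<in> A \<and> ys \<in> lenlists A n"
  by (cases xs) (auto simp: lenlists_def)

lemma wA_nn: "0 \<le> q \<Longrightarrow> 0 \<le> C \<Longrightarrow> 0 \<le> wA q C h t"
  by (simp add: wA_def)

lemma wB_nn: "0 \<le> q \<Longrightarrow> 0 \<le> C \<Longrightarrow> 0 \<le> wB q C h t"
  by (simp add: wB_def)

lemma lenA:
  assumes q0: "0 \<le> q" "0 \<le> C" and hA: "(wA q C h has_sum C) (H h)"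
  shows "((\<lambda>ts. wA q C (Suc h) (Node ts)) has_sum (q * C) ^ n) (lenlists (H h) n)"
proof (induction n)
  case 0
  have "((\<lambda>ts. wA q C (Suc h) (Node ts)) has_sum (\<Sum>ts\<in>{[]}. wA q C (Suc h) (Node ts))) {[]}"
    by (rule has_sum_finite) simp
  then show ?case by (simp add: lenlists_0 wA_Node)
next
  case (Suc n)
  have "((\<lambda>xs. q * wA q C h (hd xs) * wA q C (Suc h) (Node (tl xs))) has_sum ((q * C) * (q * C) ^ n))
     (lenlists (H h) (Suc n))"
    by (rule Lcons[OF has_sum_cmult_right[OF hA] Suc]) (use q0 in \<open>auto intro!: mult_nonneg_nonneg wA_nn\<close>)
  also have "?this \<longleftrightarrow> ?case"
    unfolding power_Suc by (rule has_sum_cong) (auto dest!: lenlists_SucE simp: wA_Node)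
  finally show ?case .
qed

lemma lenB:
  assumes q0: "0 \<le> q" "0 \<le> C" and hA: "(wA q C h has_sum C) (H h)"
    and hB: "(wB q C h has_sum b) (H h)"
  shows "((\<lambda>ts. wB q C (Suc h) (Node ts)) has_sum (real n * (q * b) * (q * C) ^ (n - 1))) (lenlists (H h) n)"
proof (induction n)
  case 0
  have "((\<lambda>ts. wB q C (Suc h) (Node ts)) has_sum (\<Sum>ts\<in>{[]}. wB q C (Suc h) (Node ts))) {[]}"
    by (rule has_sum_finite) simp
  then show ?case by (simp add: lenlists_0 wB_def)
next
  case (Suc n)
  have 1: "((\<lambda>xs. q * wB q C h (hd xs) * wA q C (Suc h) (Node (tl xs))) has_sum ((q * b) * (q * C) ^ n))
     (lenlists (H h) (Suc n))"
    by (rule Lcons[OF has_sum_cmult_right[OF hB] lenA[OF q0 hA]]) (use q0 in \<open>auto intro!: mult_nonneg_nonneg wA_nn wB_nn\<close>)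
  have 2: "((\<lambda>xs. q * wA q C h (hd xs) * wB q C (Suc h) (Node (tl xs))) has_sum
       ((q * C) * (real n * (q * b) * (q * C) ^ (n - 1)))) (lenlists (H h) (Suc n))"
    by (rule Lcons[OF has_sum_cmult_right[OF hA] Suc]) (use q0 in \<open>auto intro!: mult_nonneg_nonneg wA_nn wB_nn\<close>)
  have val: "(q * b) * (q * C) ^ n + (q * C) * (real n * (q * b) * (q * C) ^ (n - 1))
      = real (Suc n) * (q * b) * (q * C) ^ (Suc n - 1)"
  proof (cases n)
    case (Suc m) then show ?thesis by (simp add: algebra_simps)
  qed simp
  from has_sum_add[OF 1 2] have "((\<lambda>xs. q * wB q C h (hd xs) * wA q C (Suc h) (Node (tl xs)) +
      q * wA q C h (hd xs) * wB q C (Suc h) (Node (tl xs))) has_sum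
      (real (Suc n) * (q * b) * (q * C) ^ (Suc n - 1))) (lenlists (H h) (Suc n))"
    by (simp only: val)
  also have "?this \<longleftrightarrow> ?case"
    by (rule has_sum_cong) (auto dest!: lenlists_SucE simp: wB_Node_Cons)
  finally show ?case .
qed

lemma inj_Node: "inj Node"
  by (auto intro: injI)

lemma sumsAB:
  assumes q0: "0 \<le> q" "0 \<le> C" and lt: "q * C < 1" and fx: "1 / (1 - q * C) = C"
  shows "(wA q C h has_sum C) (H h) \<and> (wB q C h has_sum (q * C ^ 2) ^ h) (H h)"
proof (induction h)
  case 0
  have "(wA q C 0 has_sum (\<Sum>t\<in>{Node []}. wA q C 0 t)) {Node []}"
       "(wB q C 0 has_sum (\<Sum>t\<in>{Node []}. wB q C 0 t)) {Node []}"
    by (rule has_sum_finite, simp)+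
  then show ?case by (simp add: H_0 wA_def[of _ _ 0 "Node []"] wB_def[of _ _ 0 "Node []"])
next
  case (Suc h)
  then have hA: "(wA q C h has_sum C) (H h)" and hB: "(wB q C h has_sum (q * C ^ 2) ^ h) (H h)"
    by auto
  have s0: "0 \<le> q * C" using q0 by simp
  have A1: "((\<lambda>ts. wA q C (Suc h) (Node ts)) has_sum (1 / (1 - q * C))) (lists (H h))"
    by (rule Lunion[OF lenA[OF q0 hA] geom_has_sum[OF s0 lt]]) (use q0 in \<open>auto intro!: wA_nn\<close>)
  have A2: "(wA q C (Suc h) has_sum C) (H (Suc h))"
    unfolding H_Suc using A1 fx by (simp add: has_sum_reindex inj_on_def o_def)
  define b where "b = (q * C ^ 2) ^ h"
  have g: "((\<lambda>n. (q * b) * (real n * (q * C) ^ (n - 1))) has_sum ((q * b) * (1 / (1 - q * C) ^ 2))) UNIV"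
    by (rule has_sum_cmult_right[OF geom_deriv_has_sum[OF s0 lt]])
  have g2: "((\<lambda>n. real n * (q * b) * (q * C) ^ (n - 1)) has_sum (q * C ^ 2) ^ Suc h) UNIV"
  proof -
    have "(q * b) * (1 / (1 - q * C) ^ 2) = (q * C ^ 2) ^ Suc h"
    proof -
      have "1 / (1 - q * C) ^ 2 = C ^ 2"
        using fx by (metis power_divide power_one)
      then show ?thesis by (simp add: b_def)
    qed
    with g show ?thesis by (simp add: algebra_simps)
  qed
  have B1: "((\<lambda>ts. wB q C (Suc h) (Node ts)) has_sum (q * C ^ 2) ^ Suc h) (lists (H h))"
    by (rule Lunion[OF lenB[OF q0 hA hB] g2[unfolded b_def]]) (use q0 in \<open>auto intro!: wB_nn\<close>)
  have B2: "(wB q C (Suc h) has_sum (q * C ^ 2) ^ Suc h) (H (Suc h))"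
    unfolding H_Suc using B1 by (simp add: has_sum_reindex inj_on_def o_def)
  show ?case using A2 B2 by simp
qed

lemma L_le: "level_count t h \<le> Suc (tree_edges t)"
proof (induction t arbitrary: h)
  case (Node ts)
  show ?case
  proof (cases h)
    case 0 then show ?thesis by simp
  next
    case (Suc h')
    have "level_count (Node ts) h = (\<Sum>t\<leftarrow>ts. level_count t h')" by (simp add: Suc)
    also have "\<dots> \<le> (\<Sum>t\<leftarrow>ts. Suc (tree_edges t))"
      by (rule sum_list_mono) (use Node in auto)
    also have "\<dots> \<le> Suc (tree_edges (Node ts))" by simp
    finally show ?thesis .
  qed
qed

lemma L_zero: "tree_height t < h \<Longrightarrow> level_count t h = 0"
proof (induction t arbitrary: h)
  case (Node ts)
  show ?case
  proof (cases h)
    case 0 then show ?thesis using Node.prems by simp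
  next
    case (Suc h')
    have "level_count t h' = 0" if "t \<in> set ts" for t
    proof -
      have "tree_height t \<le> Max (set (map tree_height ts))"
        using that by (intro Max_ge) auto
      then have "tree_height t < h'" using Node.prems Suc that by (auto split: if_splits)
      then show ?thesis using Node.IH that by blast
    qed
    then show ?thesis by (simp add: Suc sum_list_eq_0_iff)
  qed
qed

lemma X_val: assumes "k > (1::real)" shows "X_fun (g_c k) = 1 / (1 + k)"
proof -
  have nz: "(1 + k)^2 \<noteq> 0" using assms by simp
  have "1 - 4 * (k / (1 + k)^2) = ((1 + k)^2 - 4 * k) / (1 + k)^2"
    using nz by (simp add: field_simps)
  also have "(1 + k)^2 - 4 * k = (k - 1)^2" by (simp add: power2_eq_square algebra_simps)
  also have "(k - 1)^2 / (1 + k)^2 = ((k - 1) / (k + 1))^2" by (simp add: power_divide add.commute)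
  finally have "1 - 4 * (k / (1 + k)^2) = ((k - 1) / (k + 1))^2" .
  then have "sqrt (1 - 4 * g_c k) = (k - 1) / (k + 1)"
    using assms by (simp add: g_c_def)
  then show ?thesis using assms by (simp add: X_fun_def field_simps)
qed

theorem mainTheorem6:
  fixes k :: real and r :: nat
  assumes "k > 1" and "r \<ge> 1"
  shows "(Lambda k has_sum 1) {T \<in> T_fin. tree_height T = r}"
proof -
  obtain h where r: "r = Suc h" using assms(2) by (cases r) auto
  define q where "q = g_c k"
  define C where "C = (1 + k) / k"
  have k0: "k > 0" using assms by simp
  have q0: "0 \<le> q" "0 \<le> C" using k0 by (auto simp: q_def C_def g_c_def)
  have qC: "q * C = 1 / (1 + k)"
  proof -
    have p: "0 < 1 + k" using k0 by simp
    have "q * C = (k * (1 + k)) / ((1 + k) * ((1 + k) * k))"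
      by (simp add: q_def C_def g_c_def power2_eq_square)
    also have "\<dots> = 1 / (1 + k)" using p k0 by (simp add: mult.assoc[symmetric])
    finally show ?thesis .
  qed
  have lt: "q * C < 1" using k0 by (simp add: qC)
  have fx: "1 / (1 - q * C) = C"
  proof -
    have "1 - q * C = k / (1 + k)" unfolding qC using k0 by (simp add: field_simps)
    then show ?thesis by (simp add: C_def)
  qed
  have nz: "(1 + k)^2 \<noteq> 0" "k \<noteq> 0" using k0 by auto
  have qC2: "q * C ^ 2 = 1 / k"
  proof -
    have "q * C ^ 2 = ((1 + k)^2 * k) / ((1 + k)^2 * k^2)"
      by (simp add: q_def C_def g_c_def power_divide mult.commute)
    also have "\<dots> = k / k^2" by (rule nonzero_mult_divide_mult_cancel_left[OF nz(1)])
    also have "\<dots> = 1 / k" using nz by (simp add: power2_eq_square)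
    finally show ?thesis .
  qed
  have X: "X_fun q = q * C" using X_val[OF assms(1)] qC by (simp add: q_def)
  have B: "(wB q C h has_sum (1 / k) ^ h) (H h)"
    using sumsAB[OF q0 lt fx, of h] qC2 by simp
  have B2: "(wB q C h has_sum (1 / k) ^ h) {t. tree_height t = h}"
  proof -
    have "(wB q C h has_sum (1 / k) ^ h) {t. tree_height t = h} \<longleftrightarrow> (wB q C h has_sum (1 / k) ^ h) (H h)"
      by (rule has_sum_cong_neutral) (auto simp: H_def wB_def L_zero)
    with B show ?thesis by simp
  qed
  have B3: "((\<lambda>t. k ^ h * wB q C h t) has_sum 1) {t. tree_height t = h}"
    using has_sum_cmult_right[OF B2, of "k ^ h"] k0 by (simp add: power_divide)
  have lam: "Lambda k (Node [t]) = k ^ h * wB q C h t" if "tree_height t = h" for t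
  proof -
    define K where "K = level_count t h"
    define e where "e = tree_edges t"
    have Ke: "K \<le> Suc e" unfolding K_def e_def by (rule L_le)
    have "Lambda k (Node [t]) = real K * k ^ h * q ^ (Suc e - K) * X_fun q ^ (K - 1)"
      using that by (simp add: Lambda_def K_def e_def q_def Let_def)
    also have "\<dots> = k ^ h * (q ^ e * real K * C ^ (K - 1))"
    proof (cases "K = 0")
      case False
      then have "Suc e - K + (K - 1) = e" using Ke by simp
      then have "q ^ (Suc e - K) * q ^ (K - 1) = q ^ e" by (metis power_add)
      then show ?thesis by (simp add: X power_mult_distrib algebra_simps)
    qed simp
    also have "\<dots> = k ^ h * wB q C h t" by (simp add: wB_def K_def e_def)
    finally show ?thesis .
  qed
  have "((\<lambda>t. k ^ h * wB q C h t) has_sum 1) {t. tree_height t = h} \<longleftrightarrow>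
        (Lambda k has_sum 1) {T \<in> T_fin. tree_height T = r}"
    by (rule has_sum_reindex_bij_witness[where j = "\<lambda>t. Node [t]" and i = "\<lambda>T. hd (kids T)"])
      (auto simp: T_fin_def r lam)
  with B3 show ?thesis by simp
qed

end
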